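(* Let $\Bbbk$ be a field, let $\mathrm{Var}$ be a variety of $\Bbbk$-algebras with one binary product defined by a set of polylinear identities, and let $\text{tri-}\mathrm{Var}$ be the corresponding replicated variety of tri-algebras. Let $X$ be a set, $\dot X=\{\dot x\mid x\in X\}$ a disjoint copy of $X$, $F=\mathrm{Var}\langle X\cup\dot X\rangle$ the free algebra of $\mathrm{Var}$ on $X\cup\dot X$, and $\varphi:F\to F$ the unique algebra homomorphism with $\varphi(x)=x$, $\varphi(\dot x)=x$ for $x\in X$. Define on the space $F$ three binary operations $$f\vdash g=\varphi(f)g,\qquad f\dashv g=f\varphi(g),\qquad f\perp g=fg\qquad (f,g\in F),$$ and denote the resulting system by $F^{(3)}$. Then $F^{(3)}$ belongs to $\text{tri-}\mathrm{Var}$.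
   Context: Tri-algebras: linear spaces with three bilinear operations $\dashv$ (=$\mu_{\{1\}}$), $\vdash$ (=$\mu_{\{2\}}$), $\perp$ (=$\mu_{\{1,2\}}$), obtained by replicating the product $\mu$ of $\mathrm{Var}$ (writing $\mu_H$ for $H\subseteq\{1,2\}$ nonempty). For a polylinear element $\Phi(x_1,\dots,x_n)$ of the free (magmatic) algebra in one binary operation and a nonempty $H\subseteq\{1,\dots,n\}$, $\Phi_H$ is obtained as follows: view each monomial of $\Phi$ as a binary rooted tree with leaves labelled $x_1,\dots,x_n$ and internal nodes labelled $\mu$; mark the leaves $x_i$, $i\in H$; at each node let $S\subseteq\{1,2\}$ be the set of its branches (left=1, right=2) whose subtrees contain a marked leaf, and replace $\mu$ by $\mu_S$ if $S\neq\varnothing$, by $\mu_{\{1\}}$ if $S=\varnothing$. The variety $\text{tri-}\mathrm{Var}$ consists of all tri-algebras satisfying (i) $(a* b)\vdash c=(a\star b)\vdash c$ and $a\dashv(b* c)=a\dashv(b\star c)$ for all $*,\star\in\{\vdash,\dashv,\perp\}$, and (ii) $\Phi_H=0$ for every defining polylinear identity $\Phi$ of $\mathrm{Var}$ of degree $n$ and every nonempty $H\subseteq\{1,\dots,n\}$. *)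

theory Defs
  imports "HOL-Library.Poly_Mapping" "HOL-Library.Multiset"
begin

text \<open>Binary rooted trees with leaves labelled in 'v (= nonassociative monomials).\<close>
datatype 'v mtree = Leaf 'v | Node "'v mtree" "'v mtree"

fun leaves :: "'v mtree \<Rightarrow> 'v list" where
  "leaves (Leaf v) = [v]"
| "leaves (Node a b) = leaves a @ leaves b"

text \<open>Elements of the free magmatic k-algebra on 'v: finitely supported
  linear combinations of monomials.\<close>
type_synonym ('k, 'v) mag = "'v mtree \<Rightarrow>\<^sub>0 'k"

definition msmult :: "'k::field \<Rightarrow> ('k, 'v) mag \<Rightarrow> ('k, 'v) mag" where
  "msmult c p = Poly_Mapping.map (\<lambda>a. c * a) p"

definition mgen :: "'v \<Rightarrow> ('k::field, 'v) mag" where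
  "mgen v = Poly_Mapping.single (Leaf v) 1"

definition mmul :: "('k::field, 'v) mag \<Rightarrow> ('k, 'v) mag \<Rightarrow> ('k, 'v) mag" where
  "mmul p q = (\<Sum>s\<in>Poly_Mapping.keys p. \<Sum>t\<in>Poly_Mapping.keys q.
      Poly_Mapping.single (Node s t) (Poly_Mapping.lookup p s * Poly_Mapping.lookup q t))"

fun eval_mtree :: "'w mtree \<Rightarrow> ('w \<Rightarrow> ('k::field, 'v) mag) \<Rightarrow> ('k, 'v) mag" where
  "eval_mtree (Leaf i) m = m i"
| "eval_mtree (Node a b) m = mmul (eval_mtree a m) (eval_mtree b m)"

definition eval_mag :: "('k::field, 'w) mag \<Rightarrow> ('w \<Rightarrow> ('k, 'v) mag) \<Rightarrow> ('k, 'v) mag" where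
  "eval_mag \<Phi> m = (\<Sum>t\<in>Poly_Mapping.keys \<Phi>. msmult (Poly_Mapping.lookup \<Phi> t) (eval_mtree t m))"

definition polylinear :: "nat \<Rightarrow> ('k::zero, nat) mag \<Rightarrow> bool" where
  "polylinear n \<Phi> \<longleftrightarrow> (\<forall>t\<in>Poly_Mapping.keys \<Phi>. mset (leaves t) = mset [1..<n+1])"

text \<open>Var is given by a set S of defining polylinear identities (n, Phi) (Phi of
  degree n). The free algebra Var<V> is the quotient of the free magmatic algebra on V
  by the verbal ideal: the ideal generated by all values of the identities.\<close>
inductive_set verbal_ideal :: "(nat \<times> ('k::field, nat) mag) set \<Rightarrow> ('k, 'v) mag set"
  for S :: "(nat \<times> ('k::field, nat) mag) set" where
  gen: "(n, \<Phi>) \<in> S \<Longrightarrow> eval_mag \<Phi> m \<in> verbal_ideal S"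
| zero: "0 \<in> verbal_ideal S"
| add: "p \<in> verbal_ideal S \<Longrightarrow> q \<in> verbal_ideal S \<Longrightarrow> p + q \<in> verbal_ideal S"
| smult: "p \<in> verbal_ideal S \<Longrightarrow> msmult c p \<in> verbal_ideal S"
| mulL: "p \<in> verbal_ideal S \<Longrightarrow> mmul q p \<in> verbal_ideal S"
| mulR: "p \<in> verbal_ideal S \<Longrightarrow> mmul p q \<in> verbal_ideal S"

text \<open>Equality in F = Var<V>, expressed on representatives.\<close>
definition free_eq :: "(nat \<times> ('k::field, nat) mag) set \<Rightarrow> ('k, 'v) mag \<Rightarrow> ('k, 'v) mag \<Rightarrow> bool" where
  "free_eq S f g \<longleftrightarrow> f - g \<in> verbal_ideal S"

text \<open>Generators X \<union> Xdot are encoded as 'x + 'x: Inl x = x, Inr x = xdot.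
  phi is the homomorphism with x \<mapsto> x, xdot \<mapsto> x (on representatives; it
  descends to F).\<close>
definition dephi :: "('k::field, 'x + 'x) mag \<Rightarrow> ('k, 'x + 'x) mag" where
  "dephi p = eval_mag p (\<lambda>v. mgen (Inl (case_sum id id v)))"

text \<open>Lt = dashv (mu_{1}), Rt = vdash (mu_{2}), Pp = perp (mu_{1,2}).\<close>
datatype triop = Lt | Rt | Pp

datatype 'v ttree = TLeaf 'v | TNode triop "'v ttree" "'v ttree"

type_synonym ('k, 'v) tripoly = "'v ttree \<Rightarrow>\<^sub>0 'k"

definition marked :: "nat set \<Rightarrow> nat mtree \<Rightarrow> bool" where
  "marked H t \<longleftrightarrow> set (leaves t) \<inter> H \<noteq> {}"

fun lab :: "bool \<Rightarrow> bool \<Rightarrow> triop" where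
  "lab True False = Lt"
| "lab False True = Rt"
| "lab True True = Pp"
| "lab False False = Lt"

fun rep :: "nat set \<Rightarrow> nat mtree \<Rightarrow> nat ttree" where
  "rep H (Leaf i) = TLeaf i"
| "rep H (Node a b) = TNode (lab (marked H a) (marked H b)) (rep H a) (rep H b)"

definition replicate_poly :: "nat set \<Rightarrow> ('k::field, nat) mag \<Rightarrow> ('k, nat) tripoly" where
  "replicate_poly H \<Phi> = (\<Sum>t\<in>Poly_Mapping.keys \<Phi>. Poly_Mapping.single (rep H t) (Poly_Mapping.lookup \<Phi> t))"

fun eval_ttree :: "(triop \<Rightarrow> 'a \<Rightarrow> 'a \<Rightarrow> 'a) \<Rightarrow> 'w ttree \<Rightarrow> ('w \<Rightarrow> 'a) \<Rightarrow> 'a" where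
  "eval_ttree opf (TLeaf i) m = m i"
| "eval_ttree opf (TNode op a b) m = opf op (eval_ttree opf a m) (eval_ttree opf b m)"

definition eval_tri :: "(triop \<Rightarrow> ('k::field, 'v) mag \<Rightarrow> ('k, 'v) mag \<Rightarrow> ('k, 'v) mag)
    \<Rightarrow> ('k, nat) tripoly \<Rightarrow> (nat \<Rightarrow> ('k, 'v) mag) \<Rightarrow> ('k, 'v) mag" where
  "eval_tri opf \<Psi> m = (\<Sum>t\<in>Poly_Mapping.keys \<Psi>. msmult (Poly_Mapping.lookup \<Psi> t) (eval_ttree opf t m))"

text \<open>The tri-algebra (with carrier the quotient of the magmatic algebra on 'v by
  the relation eq, operations given on representatives by opf) belongs to tri-Var.\<close>
definition in_triVar ::
  "(nat \<times> ('k::field, nat) mag) set \<Rightarrow> (('k, 'v) mag \<Rightarrow> ('k, 'v) mag \<Rightarrow> bool)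
   \<Rightarrow> (triop \<Rightarrow> ('k, 'v) mag \<Rightarrow> ('k, 'v) mag \<Rightarrow> ('k, 'v) mag) \<Rightarrow> bool" where
  "in_triVar S eq opf \<longleftrightarrow>
     (\<forall>a b c o1 o2.
        eq (opf Rt (opf o1 a b) c) (opf Rt (opf o2 a b) c) \<and>
        eq (opf Lt a (opf o1 b c)) (opf Lt a (opf o2 b c))) \<and>
     (\<forall>(n, \<Phi>)\<in>S. \<forall>H. H \<noteq> {} \<longrightarrow> H \<subseteq> {1..n} \<longrightarrow>
        (\<forall>m. eq (eval_tri opf (replicate_poly H \<Phi>) m) 0))"

fun F3_op :: "triop \<Rightarrow> ('k::field, 'x + 'x) mag \<Rightarrow> ('k, 'x + 'x) mag \<Rightarrow> ('k, 'x + 'x) mag" where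
  "F3_op Lt f g = mmul f (dephi g)"
| "F3_op Rt f g = mmul (dephi f) g"
| "F3_op Pp f g = mmul f g"

end

theory Submission
  imports Defs
begin

lemma pm_induct[case_names zero add]:
  assumes "P 0" "\<And>f a b. P f \<Longrightarrow> P (f + Poly_Mapping.single a b)" shows "P f"
proof (induct f rule: Poly_Mapping.update_induct)
  case const then show ?case using assms(1) by simp
next
  case (update f a b)
  have "Poly_Mapping.update a b f = f + Poly_Mapping.single a b"
    by (rule poly_mapping_eqI) (use update(1) in \<open>auto simp: lookup_update lookup_add lookup_single not_in_keys_iff_lookup_eq_zero when_def\<close>)
  then show ?case using assms(2) update(3) by simp
qed

lemma pm_linear_eq:
  fixes L M :: "('a \<Rightarrow>\<^sub>0 'b::comm_monoid_add) \<Rightarrow> 'c::comm_monoid_add"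
  assumes "L 0 = M 0" "\<And>p q. L (p + q) = L p + L q" "\<And>p q. M (p + q) = M p + M q"
    "\<And>k c. L (Poly_Mapping.single k c) = M (Poly_Mapping.single k c)"
  shows "L p = M p"
proof (induct p rule: pm_induct)
  case zero then show ?case using assms(1) .
next
  case (add f a b) then show ?case using assms(2-4) by simp
qed

lemma lsum_superset:
  assumes "finite K" "Poly_Mapping.keys p \<subseteq> K" "\<And>t. F t 0 = 0"
  shows "(\<Sum>t\<in>Poly_Mapping.keys p. F t (Poly_Mapping.lookup p t)) = (\<Sum>t\<in>K. F t (Poly_Mapping.lookup p t))"
  by (rule sum.mono_neutral_left) (use assms in \<open>auto simp: not_in_keys_iff_lookup_eq_zero\<close>)

lemma lsum_add:
  assumes "\<And>t. F t 0 = 0" "\<And>t a b. F t (a+b) = F t a + F t b"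
  shows "(\<Sum>t\<in>Poly_Mapping.keys (p+q). F t (Poly_Mapping.lookup (p+q) t))
     = (\<Sum>t\<in>Poly_Mapping.keys p. F t (Poly_Mapping.lookup p t)) + (\<Sum>t\<in>Poly_Mapping.keys q. F t (Poly_Mapping.lookup q t))"
proof -
  let ?K = "Poly_Mapping.keys p \<union> Poly_Mapping.keys q"
  have "(\<Sum>t\<in>Poly_Mapping.keys (p+q). F t (Poly_Mapping.lookup (p+q) t)) = (\<Sum>t\<in>?K. F t (Poly_Mapping.lookup (p+q) t))"
    by (rule lsum_superset) (use assms keys_add[of p q] in auto)
  also have "\<dots> = (\<Sum>t\<in>?K. F t (Poly_Mapping.lookup p t)) + (\<Sum>t\<in>?K. F t (Poly_Mapping.lookup q t))"
    by (simp add: lookup_add assms(2) sum.distrib)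
  also have "(\<Sum>t\<in>?K. F t (Poly_Mapping.lookup p t)) = (\<Sum>t\<in>Poly_Mapping.keys p. F t (Poly_Mapping.lookup p t))"
    by (rule lsum_superset[symmetric]) (use assms in auto)
  also have "(\<Sum>t\<in>?K. F t (Poly_Mapping.lookup q t)) = (\<Sum>t\<in>Poly_Mapping.keys q. F t (Poly_Mapping.lookup q t))"
    by (rule lsum_superset[symmetric]) (use assms in auto)
  finally show ?thesis .
qed

lemma lookup_msmult: "Poly_Mapping.lookup (msmult c p) k = c * Poly_Mapping.lookup p k"
  by (simp add: msmult_def Poly_Mapping.map.rep_eq when_def)

lemma msmult_add: "msmult c (p + q) = msmult c p + msmult c q"
  by (rule poly_mapping_eqI) (simp add: lookup_msmult lookup_add algebra_simps)

lemma msmult_addc: "msmult (a + b) p = msmult a p + msmult b p"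
  by (rule poly_mapping_eqI) (simp add: lookup_msmult lookup_add algebra_simps)

lemma msmult_0 [simp]: "msmult 0 p = 0"
  by (rule poly_mapping_eqI) (simp add: lookup_msmult)

lemma msmult_zero [simp]: "msmult c 0 = 0"
  by (rule poly_mapping_eqI) (simp add: lookup_msmult)

lemma msmult_1 [simp]: "msmult 1 p = p"
  by (rule poly_mapping_eqI) (simp add: lookup_msmult)

lemma msmult_msmult: "msmult a (msmult b p) = msmult (a * b) p"
  by (rule poly_mapping_eqI) (simp add: lookup_msmult algebra_simps)

lemma msmult_single: "msmult c (Poly_Mapping.single k a) = Poly_Mapping.single k (c * a)"
  by (rule poly_mapping_eqI) (simp add: lookup_msmult lookup_single when_def)

lemma msmult_sum: "msmult c (sum f A) = (\<Sum>x\<in>A. msmult c (f x))"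
  by (induct A rule: infinite_finite_induct) (simp_all add: msmult_add)

lemma mmul_0L [simp]: "mmul 0 q = 0"
  by (simp add: mmul_def)

lemma mmul_0R [simp]: "mmul p 0 = 0"
  by (simp add: mmul_def)

lemma mmul_addL: "mmul (p + q) r = mmul p r + mmul q r"
  unfolding mmul_def
  by (rule lsum_add) (simp_all add: distrib_right single_add sum.distrib)

lemma mmul_addR: "mmul p (q + r) = mmul p q + mmul p r"
proof -
  have "(\<Sum>t\<in>Poly_Mapping.keys (q + r). Poly_Mapping.single (Node s t) (Poly_Mapping.lookup p s * Poly_Mapping.lookup (q + r) t))
     = (\<Sum>t\<in>Poly_Mapping.keys q. Poly_Mapping.single (Node s t) (Poly_Mapping.lookup p s * Poly_Mapping.lookup q t))
     + (\<Sum>t\<in>Poly_Mapping.keys r. Poly_Mapping.single (Node s t) (Poly_Mapping.lookup p s * Poly_Mapping.lookup r t))" for s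
    by (rule lsum_add[where F="\<lambda>t b. Poly_Mapping.single (Node s t) (Poly_Mapping.lookup p s * b)"])
       (simp_all add: distrib_left single_add)
  then show ?thesis unfolding mmul_def by (simp add: sum.distrib)
qed

lemma mmul_single: "mmul (Poly_Mapping.single s a) (Poly_Mapping.single t b) = Poly_Mapping.single (Node s t) (a * b)"
  by (simp add: mmul_def)

lemma mmul_smultL: "mmul (msmult c p) q = msmult c (mmul p q)"
proof (rule pm_linear_eq[where L="\<lambda>p. mmul (msmult c p) q" and M="\<lambda>p. msmult c (mmul p q)"])
  fix k a
  show "mmul (msmult c (Poly_Mapping.single k a)) q = msmult c (mmul (Poly_Mapping.single k a) q)"
    by (rule pm_linear_eq[where L="\<lambda>q. mmul (msmult c (Poly_Mapping.single k a)) q"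
          and M="\<lambda>q. msmult c (mmul (Poly_Mapping.single k a) q)"])
       (simp_all add: mmul_addR msmult_add msmult_single mmul_single mult.assoc)
qed (simp_all add: mmul_addL msmult_add)

lemma mmul_smultR: "mmul p (msmult c q) = msmult c (mmul p q)"
proof (rule pm_linear_eq[where L="\<lambda>p. mmul p (msmult c q)" and M="\<lambda>p. msmult c (mmul p q)"])
  fix k a
  show "mmul (Poly_Mapping.single k a) (msmult c q) = msmult c (mmul (Poly_Mapping.single k a) q)"
    by (rule pm_linear_eq[where L="\<lambda>q. mmul (Poly_Mapping.single k a) (msmult c q)"
          and M="\<lambda>q. msmult c (mmul (Poly_Mapping.single k a) q)"])
       (simp_all add: mmul_addR msmult_add msmult_single mmul_single algebra_simps)
qed (simp_all add: mmul_addL msmult_add)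

lemma eval_mag_0 [simp]: "eval_mag 0 m = 0"
  by (simp add: eval_mag_def)

lemma eval_mag_add: "eval_mag (p + q) m = eval_mag p m + eval_mag q m"
  unfolding eval_mag_def by (rule lsum_add) (simp_all add: msmult_addc)

lemma eval_mag_single: "eval_mag (Poly_Mapping.single t c) m = msmult c (eval_mtree t m)"
  by (simp add: eval_mag_def)

lemma eval_mag_smult: "eval_mag (msmult c p) m = msmult c (eval_mag p m)"
  by (rule pm_linear_eq[where L="\<lambda>p. eval_mag (msmult c p) m" and M="\<lambda>p. msmult c (eval_mag p m)"])
     (simp_all add: eval_mag_add msmult_add msmult_single eval_mag_single msmult_msmult)

lemma eval_mag_mmul: "eval_mag (mmul f g) m = mmul (eval_mag f m) (eval_mag g m)"
proof (rule pm_linear_eq[where L="\<lambda>f. eval_mag (mmul f g) m" and M="\<lambda>f. mmul (eval_mag f m) (eval_mag g m)"])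
  fix k a
  show "eval_mag (mmul (Poly_Mapping.single k a) g) m = mmul (eval_mag (Poly_Mapping.single k a) m) (eval_mag g m)"
    by (rule pm_linear_eq[where L="\<lambda>g. eval_mag (mmul (Poly_Mapping.single k a) g) m"
          and M="\<lambda>g. mmul (eval_mag (Poly_Mapping.single k a) m) (eval_mag g m)"])
       (simp_all add: mmul_addR eval_mag_add mmul_single eval_mag_single mmul_smultL mmul_smultR msmult_msmult mult.commute)
qed (simp_all add: mmul_addL eval_mag_add)

lemma eval_mag_mtree: "eval_mag (eval_mtree t m) \<sigma> = eval_mtree t (\<lambda>i. eval_mag (m i) \<sigma>)"
  by (induct t) (simp_all add: eval_mag_mmul)

lemma dephi_mmul: "dephi (mmul f g) = mmul (dephi f) (dephi g)"
  unfolding dephi_def by (rule eval_mag_mmul)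

lemma dephi_idem: "dephi (dephi p) = dephi (p :: ('k::field, 'x + 'x) mag)"
proof (rule pm_linear_eq[where L="\<lambda>p::('k, 'x + 'x) mag. dephi (dephi p)" and M="dephi :: ('k, 'x + 'x) mag \<Rightarrow> _"])
  fix k :: "('x + 'x) mtree" and c :: 'k
  have s: "eval_mag (mgen (Inl (case_sum id id v))) (\<lambda>v. mgen (Inl (case_sum id id v))) = (mgen (Inl (case_sum id id v)) :: ('k, 'x + 'x) mag)" for v :: "'x + 'x"
    by (simp add: mgen_def eval_mag_single)
  show "dephi (dephi (Poly_Mapping.single k c)) = dephi (Poly_Mapping.single k c)"
    unfolding dephi_def eval_mag_single eval_mag_smult eval_mag_mtree
    by (rule arg_cong[where f="msmult c"], rule arg_cong[where f="eval_mtree k"], rule ext, rule s)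
qed (simp_all add: dephi_def eval_mag_add)

lemma eval_tri_0 [simp]: "eval_tri opf 0 m = 0"
  by (simp add: eval_tri_def)

lemma eval_tri_add: "eval_tri opf (p + q) m = eval_tri opf p m + eval_tri opf q m"
  unfolding eval_tri_def by (rule lsum_add) (simp_all add: msmult_addc)

lemma eval_tri_single: "eval_tri opf (Poly_Mapping.single t c) m = msmult c (eval_ttree opf t m)"
  by (simp add: eval_tri_def)

lemma eval_tri_sum: "eval_tri opf (sum f A) m = (\<Sum>x\<in>A. eval_tri opf (f x) m)"
  by (induct A rule: infinite_finite_induct) (simp_all add: eval_tri_add)

theorem lemma3p1:
  fixes S :: "(nat \<times> ('k::field, nat) mag) set"
  assumes "\<forall>(n, \<Phi>)\<in>S. polylinear n \<Phi>"
  shows "in_triVar S (free_eq S) (F3_op :: triop \<Rightarrow> ('k, 'x + 'x) mag \<Rightarrow> ('k, 'x + 'x) mag \<Rightarrow> ('k, 'x + 'x) mag)"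
proof -
  have dF: "dephi (F3_op o1 a b) = mmul (dephi a) (dephi b)" for o1 and a b :: "('k, 'x + 'x) mag"
    by (cases o1) (simp_all add: dephi_mmul dephi_idem)
  have part1: "\<forall>(a::('k, 'x + 'x) mag) b c o1 o2. free_eq S (F3_op Rt (F3_op o1 a b) c) (F3_op Rt (F3_op o2 a b) c) \<and>
        free_eq S (F3_op Lt a (F3_op o1 b c)) (F3_op Lt a (F3_op o2 b c))"
    by (simp add: dF free_eq_def verbal_ideal.zero)
  have part2: "free_eq S (eval_tri F3_op (replicate_poly H \<Phi>) m) 0"
    if nS: "(n, \<Phi>) \<in> S" and H: "H \<noteq> {}" "H \<subseteq> {1..n}"
    for n \<Phi> H and m :: "nat \<Rightarrow> ('k, 'x + 'x) mag"
  proof -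
    define m' where "m' i = (if i \<in> H then m i else dephi (m i))" for i
    have mN: "marked H (Node a b) = (marked H a \<or> marked H b)" for a b
      by (auto simp: marked_def)
    have key: "(marked H t \<longrightarrow> eval_ttree F3_op (rep H t) m = eval_mtree t m') \<and>
               (\<not> marked H t \<longrightarrow> dephi (eval_ttree F3_op (rep H t) m) = eval_mtree t m')" for t
    proof (induct t)
      case (Leaf i) then show ?case by (simp add: marked_def m'_def)
    next
      case (Node a b)
      have "\<not> marked H a \<Longrightarrow> dephi (eval_mtree a m') = eval_mtree a m'"
        using Node(1) dephi_idem by metis
      moreover have "\<not> marked H b \<Longrightarrow> dephi (eval_mtree b m') = eval_mtree b m'"
        using Node(2) dephi_idem by metis
      ultimately show ?case using Node
        by (cases "marked H a"; cases "marked H b") (simp_all add: mN dephi_mmul dephi_idem)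
    qed
    have pl: "polylinear n \<Phi>" using assms nS by auto
    have mk: "marked H t" if "t \<in> Poly_Mapping.keys \<Phi>" for t
    proof -
      have "mset (leaves t) = mset [1..<n+1]" using pl that by (simp add: polylinear_def)
      then have "set (leaves t) = set [1..<n+1]" by (metis set_mset_mset)
      then have "set (leaves t) = {1..n}" by auto
      then show ?thesis using H unfolding marked_def by blast
    qed
    have "eval_tri F3_op (replicate_poly H \<Phi>) m = eval_mag \<Phi> m'"
      unfolding replicate_poly_def eval_tri_sum eval_tri_single eval_mag_def
      using key mk by (intro sum.cong) auto
    then show ?thesis by (simp add: free_eq_def verbal_ideal.gen[OF nS])
  qed
  show ?thesis unfolding in_triVar_def
    apply (rule conjI)
     apply (rule part1)
    using part2 by blast
qed

end
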